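(* Suppose Assumption A and Assumption B (defined in the context) hold for the dynamic accuracy DFO algorithm described in the context, whose criticality parameter satisfies $\epsilon\in(0,1)$. Suppose $\|\nabla f(\theta^k)\|\ge\epsilon$ for all $k=0,\ldots,k_\epsilon$. Then for all $k\le k_\epsilon$, $$\Delta^k\ge\Delta_{\min}:=\gamma_{\rm dec}\min\left(\Delta^0,\frac{c_0\epsilon}{\kappa_{\rm eg}+1},\frac{\gamma_{\rm dec}\epsilon}{\kappa_{\rm eg}+1}\right)>0,$$ where $c_0:=\min\left(\frac{1-\eta_2-2\eta_1'}{4\kappa_{\rm ef}},\frac{1}{\kappa_H}\right)$.
   Context: Setting. Let $n,d\ge 1$ and $r=(r_1,\ldots,r_n):\mathbb{R}^d\to\mathbb{R}^n$, with objective $f(\theta)=\frac1n\|r(\theta)\|^2=\frac1n\sum_{i=1}^n r_i(\theta)^2$ (Euclidean norm). In the application, $r_i(\theta)=\|\hat x_i(\theta)-x_i\|$ where $\hat x_i(\theta)$ is the minimizer of a lower-level problem that can only be computed approximately. The algorithm never sees $r$ exactly: for any $\theta$ it can compute an approximation $\tilde r(\theta)$ (in the application $\tilde r_i(\theta)=\|\tilde x_i(\theta)-x_i\|$ with $\tilde x_i(\theta)$ an approximate minimizer whose error can be made as small as desired), and sets $\tilde f(\theta)=\frac1n\|\tilde r(\theta)\|^2$. We say $\tilde f(\theta)$ is evaluated with accuracy $\delta$ if $|\tilde f(\theta)-f(\theta)|\le\delta$. Models. At iteration $k$ the algorithm holds an iterate $\theta^k$, a radius $\Delta^k>0$ (here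 $\Delta^k$ denotes its value after the criticality and accuracy phases of iteration $k$), and interpolation points $z^0=\theta^k,z^1,\ldots,z^d\in\mathbb{R}^d$ with $z^1-\theta^k,\ldots,z^d-\theta^k$ linearly independent; $J^k\in\mathbb{R}^{n\times d}$ is the unique matrix with $\tilde r(\theta^k)+J^k(z^t-\theta^k)=\tilde r(z^t)$ for $t=1,\ldots,d$. Set $M^k(s)=\tilde r(\theta^k)+J^k s$ and $m^k(s)=\frac1n\|M^k(s)\|^2=\tilde f(\theta^k)+(g^k)^Ts+\frac12 s^TH^ks$ with $g^k=\frac2n (J^k)^T\tilde r(\theta^k)$, $H^k=\frac2n(J^k)^TJ^k$. Fixed constants $\kappa_{\rm ef},\kappa_{\rm eg}>0$ (independent of $k,\theta^k,\Delta^k$) are given, and $m^k$ is called fully linear in $B(\theta^k,\Delta^k)$ if $|f(\theta^k+s)-m^k(s)|\le\kappa_{\rm ef}(\Delta^k)^2$ and $\|\nabla f(\theta^k+s)-\nabla m^k(s)\|\le\kappa_{\rm eg}\Delta^k$ for all $\|s\|\le\Delta^k$. The algorithm has a procedure which, by replacing interpolation points, makes the model fully linear in a given ball. Algorithm. Parameters: $\Delta_{\max}>0$, $0<\gamma_{\rm dec}<1<\gamma_{\rm inc}$, $0<\eta_1\le\eta_2<1$, $0<\eta_1'<\min(\eta_1,1-\eta_2)/2$, $\epsilon>0$; inputs $\theta^0\in\mathbb{R}^d$, $0<\Delta^0\le\Delta_{\max}$. Build an initial model $m^0$ from an arbitrary interpolation set. For $k=0,1,2,\ldots$: (1) [accuracy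 phase] repeat: (a) except on the first pass, re-evaluate $\tilde f(\theta^k)$ with accuracy $\delta^k\le\eta_1'[m^k(0)-m^k(s^k)]$ using the $s^k$ from the previous pass; (b) [criticality phase] if $\|g^k\|\le\epsilon$, replace $\Delta^k$ by $\gamma_{\rm dec}^i\Delta^k$ for $i=0,1,2,\ldots$ (making the model fully linear in the current ball) until $m^k$ is fully linear in $B(\theta^k,\Delta^k)$ and $\Delta^k\le\|g^k\|$; (c) compute $s^k$ with $\|s^k\|\le\Delta^k$ approximately minimizing $m^k$ over that ball; until $\tilde f(\theta^k)$ has been evaluated with accuracy $\delta^k\le\eta_1'[m^k(0)-m^k(s^k)]$. (2) Evaluate $\tilde f(\theta^k+s^k)$ with accuracy $\delta^k_+\le\eta_1'[m^k(0)-m^k(s^k)]$ and set $\tilde\rho^k=\frac{\tilde f(\theta^k)-\tilde f(\theta^k+s^k)}{m^k(0)-m^k(s^k)}$. (3) Set $\theta^{k+1}=\theta^k+s^k$ if $\tilde\rho^k\ge\eta_2$, or if $\tilde\rho^k\ge\eta_1$ and $m^k$ is fully linear in $B(\theta^k,\Delta^k)$; otherwise $\theta^{k+1}=\theta^k$. Set $\Delta^{k+1}=\min(\gamma_{\rm inc}\Delta^k,\Delta_{\max})$ if $\tilde\rho^k\ge\eta_2$; $\Delta^{k+1}=\Delta^k$ if $\tilde\rho^k<\eta_2$ and $m^k$ is not fully linear in $B(\theta^k,\Delta^k)$; $\Delta^{k+1}=\gamma_{\rm dec}\Delta^k$ otherwise. (4) If $\theta^{k+1}=\theta^k+s^k$,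 form $m^{k+1}$ by adding $\theta^{k+1}$ to the interpolation set (removing an existing point); otherwise set $m^{k+1}=m^k$ if $m^k$ is fully linear in $B(\theta^k,\Delta^k)$, else form $m^{k+1}$ by making $m^k$ fully linear in $B(\theta^{k+1},\Delta^{k+1})$. Assumption A: the set $\mathcal{B}=\{z: \|z-\theta\|\le\Delta_{\max}\text{ for some }\theta\text{ with }f(\theta)\le f(\theta^0)\}$ is bounded, and $r$ is continuously differentiable on $\mathcal{B}$ with $\partial r$ Lipschitz continuous with constant $L_J$ on $\mathcal{B}$. Assumption B: for all $k$, $m^k(0)-m^k(s^k)\ge\frac12\|g^k\|\min\left(\Delta^k,\frac{\|g^k\|}{\|H^k\|+1}\right)$, and there is $\kappa_H\ge1$ with $\|H^k\|+1\le\kappa_H$ for all $k$. *)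

theory Defs
  imports "HOL-Analysis.Analysis"
begin

text \<open>Parameters are vectors in R^d (index type 'd), residuals in R^n (index type 'n).
  Matrices J in R^{n x d} are of type real^'d^'n.\<close>

definition fobj :: "(real^'d \<Rightarrow> real^'n) \<Rightarrow> real^'d \<Rightarrow> real" where
  "fobj r \<theta> = norm (r \<theta>) ^ 2 / real CARD('n)"

definition grad :: "(real^'d \<Rightarrow> real) \<Rightarrow> real^'d \<Rightarrow> real^'d" where
  "grad F x = (THE G. (F has_derivative (\<lambda>h. G \<bullet> h)) (at x))"

text \<open>Model m(s) = (1/n) |rt + J s|^2 built from rt = tilde r(theta^k) and J = J^k.\<close>
definition mval :: "real^'n \<Rightarrow> real^'d^'n \<Rightarrow> real^'d \<Rightarrow> real" where
  "mval rt J s = norm (rt + J *v s) ^ 2 / real CARD('n)"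

definition mg :: "real^'n \<Rightarrow> real^'d^'n \<Rightarrow> real^'d" where
  "mg rt J = (2 / real CARD('n)) *\<^sub>R (transpose J *v rt)"

definition mH :: "real^'d^'n \<Rightarrow> real^'d^'d" where
  "mH J = (2 / real CARD('n)) *\<^sub>R (transpose J ** J)"

definition mgrad :: "real^'n \<Rightarrow> real^'d^'n \<Rightarrow> real^'d \<Rightarrow> real^'d" where
  "mgrad rt J s = mg rt J + mH J *v s"

definition matnorm :: "real^'d^'d \<Rightarrow> real" where
  "matnorm H = onorm (\<lambda>x. H *v x)"

definition fully_linear ::
  "(real^'d \<Rightarrow> real) \<Rightarrow> real \<Rightarrow> real \<Rightarrow> real^'d \<Rightarrow> real \<Rightarrow> real^'n \<Rightarrow> real^'d^'n \<Rightarrow> bool" where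
  "fully_linear F kef keg \<theta> D rt J \<longleftrightarrow>
     (\<forall>s. norm s \<le> D \<longrightarrow>
        \<bar>F (\<theta> + s) - mval rt J s\<bar> \<le> kef * D ^ 2 \<and>
        norm (grad F (\<theta> + s) - mgrad rt J s) \<le> keg * D)"

definition assumption_A :: "(real^'d \<Rightarrow> real^'n) \<Rightarrow> real^'d \<Rightarrow> real \<Rightarrow> real \<Rightarrow> bool" where
  "assumption_A r \<theta>0 Dmax LJ \<longleftrightarrow>
    (let B = {z. \<exists>\<theta>. fobj r \<theta> \<le> fobj r \<theta>0 \<and> dist z \<theta> \<le> Dmax} in
      bounded B \<and>
      (\<exists>r'. (\<forall>z\<in>B. (r has_derivative r' z) (at z)) \<and>
            (\<forall>z\<in>B. \<forall>w\<in>B. onorm (\<lambda>h. r' z h - r' w h) \<le> LJ * dist z w)))"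

definition assumption_B :: "real \<Rightarrow> nat \<Rightarrow> (nat \<Rightarrow> real) \<Rightarrow> (nat \<Rightarrow> real^'n)
    \<Rightarrow> (nat \<Rightarrow> real^'d^'n) \<Rightarrow> (nat \<Rightarrow> real^'d) \<Rightarrow> bool" where
  "assumption_B kH K D rt J s \<longleftrightarrow>
    (\<forall>k\<le>K.
       mval (rt k) (J k) 0 - mval (rt k) (J k) (s k)
         \<ge> 1/2 * norm (mg (rt k) (J k)) *
            min (D k) (norm (mg (rt k) (J k)) / (matnorm (mH (J k)) + 1))
     \<and> matnorm (mH (J k)) + 1 \<le> kH)"

text \<open>A run (iterations 0..K) of the dynamic accuracy DFO algorithm.
  theta k = iterate, Dpre k = radius at the start of iteration k,
  D k = radius after the criticality and accuracy phases of iteration k,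
  rt k = final (most accurate) evaluation tilde r(theta^k), J k = final model matrix,
  s k = step, rtp k = evaluation tilde r(theta^k + s^k).\<close>
definition dfo_run ::
  "(real^'d \<Rightarrow> real^'n) \<Rightarrow> real \<Rightarrow> real \<Rightarrow> real \<Rightarrow> real \<Rightarrow> real \<Rightarrow> real \<Rightarrow> real \<Rightarrow> real
   \<Rightarrow> real \<Rightarrow> real^'d \<Rightarrow> real \<Rightarrow> nat
   \<Rightarrow> (nat \<Rightarrow> real^'d) \<Rightarrow> (nat \<Rightarrow> real) \<Rightarrow> (nat \<Rightarrow> real) \<Rightarrow> (nat \<Rightarrow> real^'n)
   \<Rightarrow> (nat \<Rightarrow> real^'d^'n) \<Rightarrow> (nat \<Rightarrow> real^'d) \<Rightarrow> (nat \<Rightarrow> real^'n) \<Rightarrow> bool" where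
  "dfo_run r kef keg Dmax gdec ginc eta1 eta2 eta1' eps \<theta>0 Delta0 K \<theta> Dpre D rt J s rtp \<longleftrightarrow>
    \<theta> 0 = \<theta>0 \<and> Dpre 0 = Delta0 \<and>
    (\<forall>k\<le>K.
      (let F = fobj r; m = mval (rt k) (J k); g = mg (rt k) (J k);
           dec = m 0 - m (s k);
           FL = fully_linear F kef keg (\<theta> k) (D k) (rt k) (J k);
           fp = norm (rtp k) ^ 2 / real CARD('n);
           \<rho> = (m 0 - fp) / dec in
       \<comment> \<open>criticality phase(s): the radius went down by j rejected checks; every rejected
           radius had (after being made fully linear there) a model gradient smaller than it\<close>
       (\<exists>j. D k = gdec ^ j * Dpre k \<and>
          (\<forall>i<j. \<exists>(rt'::real^'n) (J'::real^'d^'n). fully_linear F kef keg (\<theta> k) (gdec ^ i * Dpre k) rt' J'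
                          \<and> norm (mg rt' J') < gdec ^ i * Dpre k)) \<and>
       \<comment> \<open>final criticality check passed\<close>
       (norm g \<le> eps \<longrightarrow> FL \<and> D k \<le> norm g) \<and>
       \<comment> \<open>trust-region step\<close>
       norm (s k) \<le> D k \<and>
       \<comment> \<open>accuracy of tilde f(theta^k) = m^k(0) (end of accuracy phase)\<close>
       \<bar>m 0 - F (\<theta> k)\<bar> \<le> eta1' * dec \<and>
       (k < K \<longrightarrow>
          \<comment> \<open>step 2: accuracy of tilde f(theta^k + s^k)\<close>
          \<bar>fp - F (\<theta> k + s k)\<bar> \<le> eta1' * dec \<and>
          \<comment> \<open>step 3: updates\<close>
          \<theta> (Suc k) = (if \<rho> \<ge> eta2 \<or> (\<rho> \<ge> eta1 \<and> FL) then \<theta> k + s k else \<theta> k) \<and>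
          Dpre (Suc k) = (if \<rho> \<ge> eta2 then min (ginc * D k) Dmax
                          else if \<not> FL then D k else gdec * D k))))"

end

theory Submission
  imports Defs
begin

lemma matnorm_nonneg: "0 \<le> matnorm H"
  unfolding matnorm_def
  by (rule onorm_pos_le) (simp add: matrix_vector_mul_bounded_linear)

lemma mgrad0: "mgrad rt J 0 = mg rt J"
  by (simp add: mgrad_def)

lemma crit_lemma:
  fixes F :: "real^'d \<Rightarrow> real" and \<theta> :: "real^'d"
  assumes "0 < gdec" "gdec < 1" "0 < keg" "0 < Dp" "eps \<le> norm (grad F \<theta>)"
    and "Dk = gdec ^ j * Dp"
    and "\<forall>i<j. \<exists>(rt'::real^'n) (J'::real^'d^'n). fully_linear F kef keg \<theta> (gdec ^ i * Dp) rt' J'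
                          \<and> norm (mg rt' J') < gdec ^ i * Dp"
  shows "min Dp (gdec * eps / (keg + 1)) \<le> Dk"
proof (cases j)
  case 0
  then show ?thesis using assms by simp
next
  case (Suc i)
  define R where "R = gdec ^ i * Dp"
  obtain rt' :: "real^'n" and J' :: "real^'d^'n" where fl: "fully_linear F kef keg \<theta> R rt' J'"
    and ng: "norm (mg rt' J') < R"
    using assms(7) Suc R_def by auto
  have "norm (grad F (\<theta> + 0) - mgrad rt' J' 0) \<le> keg * R"
    using fl unfolding fully_linear_def
    by (metis norm_zero R_def assms(1,4) zero_less_power mult_pos_pos less_imp_le)
  hence g1: "norm (grad F \<theta> - mg rt' J') \<le> keg * R" by (simp add: mgrad0)
  have "norm (grad F \<theta>) \<le> norm (mg rt' J') + norm (grad F \<theta> - mg rt' J')"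
    by (metis add.commute diff_add_cancel norm_triangle_ineq)
  hence "eps < (keg + 1) * R" using g1 ng assms(5) by (simp add: algebra_simps)
  hence "eps / (keg + 1) < R" using assms(3) by (simp add: field_simps)
  hence "gdec * eps / (keg + 1) < gdec * R" using assms(1) by (metis mult_strict_left_mono times_divide_eq_right)
  moreover have "Dk = gdec * R" using assms(6) Suc R_def by simp
  ultimately show ?thesis by simp
qed

lemma ratio_lemma:
  fixes F :: "real^'d \<Rightarrow> real" and \<theta> sk :: "real^'d" and rt :: "real^'n" and J :: "real^'d^'n"
  assumes fl: "fully_linear F kef keg \<theta> D rt J"
    and ge: "eps \<le> norm (grad F \<theta>)" and sk: "norm sk \<le> D" and D0: "0 < D"
    and Dsmall: "D < c0 * eps / (keg + 1)"
    and c0a: "c0 \<le> (1 - eta2 - 2 * eta1') / (4 * kef)" and c0b: "c0 \<le> 1 / kH"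
    and kH: "1 \<le> kH" and mn: "matnorm (mH J) + 1 \<le> kH"
    and decdef: "dec = mval rt J 0 - mval rt J sk"
    and decB: "dec \<ge> 1/2 * norm (mg rt J) * min D (norm (mg rt J) / (matnorm (mH J) + 1))"
    and fp: "\<bar>fp - F (\<theta> + sk)\<bar> \<le> eta1' * dec"
    and pos: "0 < kef" "0 < keg" "0 < eps" "0 < eta1'" "eta2 < 1"
  shows "eta2 \<le> (mval rt J 0 - fp) / dec"
proof -
  define ng where "ng = norm (mg rt J)"
  define mn1 where "mn1 = matnorm (mH J) + 1"
  have mn1pos: "1 \<le> mn1" using matnorm_nonneg[of "mH J"] mn1_def by simp
  have "norm (grad F (\<theta> + 0) - mgrad rt J 0) \<le> keg * D"
    using fl D0 unfolding fully_linear_def by (metis norm_zero less_imp_le)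
  hence g1: "norm (grad F \<theta> - mg rt J) \<le> keg * D" by (simp add: mgrad0)
  have "norm (grad F \<theta>) \<le> norm (mg rt J) + norm (grad F \<theta> - mg rt J)"
    by (metis add.commute diff_add_cancel norm_triangle_ineq)
  hence ng1: "eps - keg * D \<le> ng" using g1 ge ng_def by simp
  have "1 / kH \<le> 1" using kH by simp
  hence c0le1: "c0 \<le> 1" using c0b by linarith
  have "0 < c0 * eps / (keg + 1)" using Dsmall D0 by linarith
  hence "0 < c0 * eps" using pos by (simp add: zero_less_divide_iff)
  hence c0pos: "0 < c0" using pos by (simp add: zero_less_mult_iff)
  have "c0 * eps \<le> eps" using c0le1 pos by simp
  hence "c0 * eps / (keg + 1) \<le> eps / (keg + 1)" using pos by (simp add: divide_right_mono)
  hence "D < eps / (keg + 1)" using Dsmall by linarith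
  hence "keg * D < keg * (eps / (keg + 1))" using pos by (intro mult_strict_left_mono)
  moreover have "eps - keg * (eps / (keg + 1)) = eps / (keg + 1)" using pos by (simp add: field_simps)
  ultimately have ngb: "eps / (keg + 1) < ng" using ng1 by linarith
  have "0 < eps / (keg + 1)" using pos by simp
  hence ngpos: "0 < ng" using ngb by linarith
  have "ng / kH \<le> ng / mn1" using mn1pos mn mn1_def ngpos pos
    by (intro divide_left_mono) auto
  moreover have "c0 * eps / (keg + 1) \<le> ng / kH"
  proof -
    have "c0 * eps / (keg + 1) = c0 * (eps / (keg + 1))" by simp
    also have "\<dots> \<le> (1 / kH) * ng" using c0b ngb c0pos pos kH
      by (intro mult_mono) auto
    finally show ?thesis by simp
  qed
  ultimately have "min D (ng / mn1) = D" using Dsmall by simp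
  hence decB2: "dec \<ge> 1/2 * ng * D" using decB ng_def mn1_def by simp
  have "0 < 1/2 * ng * D" using ngpos D0 by simp
  hence decpos: "0 < dec" using decB2 by linarith
  have "\<bar>F (\<theta> + sk) - mval rt J sk\<bar> \<le> kef * D ^ 2" using fl sk unfolding fully_linear_def by simp
  have key: "kef * D ^ 2 \<le> (1 - eta2 - 2 * eta1') / 2 * dec"
  proof -
    have "4 * kef * c0 \<le> 1 - eta2 - 2 * eta1'" using c0a pos by (simp add: field_simps)
    have "c0 * (eps / (keg + 1)) \<le> c0 * ng" using ngb c0pos by (intro mult_left_mono) auto
    hence "D \<le> c0 * ng" using Dsmall by simp
    hence "kef * D ^ 2 \<le> kef * (c0 * ng) * D" using pos D0 by (simp add: power2_eq_square)
    also have "\<dots> = (4 * kef * c0) * (1/4 * ng * D)" by simp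
    also have "\<dots> \<le> (1 - eta2 - 2 * eta1') * (1/4 * ng * D)"
      using \<open>4 * kef * c0 \<le> _\<close> ngpos D0 by (simp add: mult_right_mono)
    also have "\<dots> \<le> (1 - eta2 - 2 * eta1') * (1/2 * dec)"
    proof (rule mult_left_mono)
      have "0 < 4 * kef * c0" using pos c0pos by simp
      thus "0 \<le> 1 - eta2 - 2 * eta1'" using \<open>4 * kef * c0 \<le> _\<close> by linarith
      show "1/4 * ng * D \<le> 1/2 * dec" using decB2 by linarith
    qed
    finally show ?thesis by simp
  qed
  have "eta2 * dec \<le> mval rt J 0 - fp"
    using key fp decdef \<open>\<bar>F (\<theta> + sk) - mval rt J sk\<bar> \<le> kef * D ^ 2\<close> pos decpos
  proof -
    have e1: "(1 - eta2 - 2 * eta1') / 2 * dec = dec / 2 - (eta2 * dec) / 2 - eta1' * dec"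
      by (simp add: field_simps)
    have e2: "eta2 * dec \<le> dec" using pos decpos by simp
    have e3: "mval rt J 0 = dec + mval rt J sk" using decdef by simp
    show ?thesis using key e1 e2 e3 fp \<open>\<bar>F (\<theta> + sk) - mval rt J sk\<bar> \<le> kef * D ^ 2\<close>
      by linarith
  qed
  thus ?thesis using decpos by (simp add: pos_le_divide_eq)
qed

theorem lemma8:
  fixes r :: "real^'d \<Rightarrow> real^'n"
    and \<theta> :: "nat \<Rightarrow> real^'d" and Dpre D :: "nat \<Rightarrow> real"
    and rt rtp :: "nat \<Rightarrow> real^'n" and J :: "nat \<Rightarrow> real^'d^'n" and s :: "nat \<Rightarrow> real^'d"
    and \<theta>0 :: "real^'d"
    and kef keg kH LJ Dmax gdec ginc eta1 eta2 eta1' eps Delta0 :: real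
    and K :: nat
  assumes "0 < Dmax" "0 < gdec" "gdec < 1" "1 < ginc"
    and "0 < eta1" "eta1 \<le> eta2" "eta2 < 1" "0 < eta1'" "eta1' < min eta1 (1 - eta2) / 2"
    and "0 < eps" "eps < 1"
    and "0 < Delta0" "Delta0 \<le> Dmax"
    and "0 < kef" "0 < keg" "1 \<le> kH"
    and "assumption_A r \<theta>0 Dmax LJ"
    and "assumption_B kH K D rt J s"
    and "dfo_run r kef keg Dmax gdec ginc eta1 eta2 eta1' eps \<theta>0 Delta0 K \<theta> Dpre D rt J s rtp"
    and "\<forall>k\<le>K. norm (grad (fobj r) (\<theta> k)) \<ge> eps"
  shows "let c0 = min ((1 - eta2 - 2 * eta1') / (4 * kef)) (1 / kH);
             Dmin = gdec * min Delta0 (min (c0 * eps / (keg + 1)) (gdec * eps / (keg + 1)))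
         in 0 < Dmin \<and> (\<forall>k\<le>K. Dmin \<le> D k)"
proof -
  define c0 where "c0 = min ((1 - eta2 - 2 * eta1') / (4 * kef)) (1 / kH)"
  define A where "A = min Delta0 (min (c0 * eps / (keg + 1)) (gdec * eps / (keg + 1)))"
  define Dmin where "Dmin = gdec * A"
  note run = assms(19)[unfolded dfo_run_def Let_def]
  have "0 < 1 - eta2 - 2 * eta1'" using assms(9) by (simp add: min_def split: if_splits)
  hence "0 < (1 - eta2 - 2 * eta1') / (4 * kef)" using assms(14) by simp
  moreover have "0 < 1 / kH" using assms(16) by simp
  ultimately have c0pos: "0 < c0" unfolding c0_def by simp
  have "0 < c0 * eps / (keg + 1)" using c0pos assms(10,15) by simp
  moreover have "0 < gdec * eps / (keg + 1)" using assms(2,10,15) by simp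
  ultimately have Apos: "0 < A" unfolding A_def using assms(12) by simp
  have Dminpos: "0 < Dmin" unfolding Dmin_def using Apos assms(2) by simp
  have DminA: "Dmin \<le> A" unfolding Dmin_def using Apos assms(3) by simp
  have A1: "A \<le> Delta0" "A \<le> c0 * eps / (keg + 1)" "A \<le> gdec * eps / (keg + 1)"
    unfolding A_def by auto
  have step: "Dmin \<le> D k \<and> D k \<le> Dpre k \<and> (k < K \<longrightarrow> Dmin \<le> Dpre (Suc k) \<and> Dpre (Suc k) \<le> Dmax)"
    if kK: "k \<le> K" and lo: "Dmin \<le> Dpre k" and hi: "Dpre k \<le> Dmax" for k
  proof -
    obtain j where Dk: "D k = gdec ^ j * Dpre k" and
      crj: "\<forall>i<j. \<exists>(rt'::real^'n) (J'::real^'d^'n). fully_linear (fobj r) kef keg (\<theta> k) (gdec ^ i * Dpre k) rt' J'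
                          \<and> norm (mg rt' J') < gdec ^ i * Dpre k"
      using run kK by blast
    have Dppos: "0 < Dpre k" using lo Dminpos by simp
    have gk: "eps \<le> norm (grad (fobj r) (\<theta> k))" using assms(20) kK by simp
    have "min (Dpre k) (gdec * eps / (keg + 1)) \<le> D k"
      by (rule crit_lemma[OF assms(2,3,15) Dppos gk Dk crj])
    hence Dlo: "Dmin \<le> D k" using lo DminA A1 by linarith
    have "gdec ^ j \<le> 1" using assms(2,3) by (simp add: power_le_one)
    hence Dhi: "D k \<le> Dpre k" using Dk Dppos by (simp add: mult_left_le_one_le)
    have Dkpos: "0 < D k" using Dlo Dminpos by simp
    have upd: "Dmin \<le> Dpre (Suc k) \<and> Dpre (Suc k) \<le> Dmax" if kl: "k < K"
    proof -
      define FL where "FL = fully_linear (fobj r) kef keg (\<theta> k) (D k) (rt k) (J k)"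
      define dec where "dec = mval (rt k) (J k) 0 - mval (rt k) (J k) (s k)"
      define fp where "fp = norm (rtp k) ^ 2 / real CARD('n)"
      define \<rho> where "\<rho> = (mval (rt k) (J k) 0 - fp) / dec"
      have Dp: "Dpre (Suc k) = (if \<rho> \<ge> eta2 then min (ginc * D k) Dmax
                          else if \<not> FL then D k else gdec * D k)"
        using run kK kl unfolding FL_def dec_def fp_def \<rho>_def by blast
      have fpacc: "\<bar>fp - fobj r (\<theta> k + s k)\<bar> \<le> eta1' * dec"
        using run kK kl unfolding dec_def fp_def by blast
      have sk: "norm (s k) \<le> D k" using run kK by blast
      have B: "dec \<ge> 1/2 * norm (mg (rt k) (J k)) *
            min (D k) (norm (mg (rt k) (J k)) / (matnorm (mH (J k)) + 1))"
           "matnorm (mH (J k)) + 1 \<le> kH"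
        using assms(18) kK unfolding assumption_B_def dec_def by auto
      show ?thesis
      proof (cases "\<rho> \<ge> eta2")
        case True
        have "D k \<le> ginc * D k" using assms(4) Dkpos by simp
        moreover have "Dmin \<le> Dmax" using DminA A1 assms(13) by linarith
        moreover have "D k \<le> Dmax" using Dhi hi by linarith
        ultimately show ?thesis using Dp True Dlo by simp
      next
        case False
        show ?thesis
        proof (cases FL)
          case False2: False
          then show ?thesis using Dp False Dlo Dhi hi by simp
        next
          case True
          have "\<not> D k < c0 * eps / (keg + 1)"
          proof
            assume sm: "D k < c0 * eps / (keg + 1)"
            have "eta2 \<le> (mval (rt k) (J k) 0 - fp) / dec"
              by (rule ratio_lemma[OF True[unfolded FL_def] gk sk Dkpos sm _ _ assms(16) B(2) dec_def B(1) fpacc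
                    assms(14,15,10,8,7)]) (auto simp: c0_def)
            thus False using False \<rho>_def by simp
          qed
          hence "A \<le> D k" using A1 by linarith
          hence "Dmin \<le> gdec * D k" unfolding Dmin_def using assms(2) by simp
          moreover have "gdec * D k \<le> D k" using assms(3) Dkpos by simp
          ultimately show ?thesis using Dp False True Dhi hi by simp
        qed
      qed
    qed
    show ?thesis using Dlo Dhi upd by blast
  qed
  have inv: "k \<le> K \<Longrightarrow> Dmin \<le> Dpre k \<and> Dpre k \<le> Dmax" for k
  proof (induction k)
    case 0
    have "Dpre 0 = Delta0" using run by blast
    then show ?case using DminA A1 assms(13) by simp
  next
    case (Suc k)
    then show ?case using step[of k] by simp
  qed
  have "\<forall>k\<le>K. Dmin \<le> D k" using inv step by blast
  thus ?thesis using Dminpos unfolding Let_def c0_def[symmetric] A_def[symmetric] Dmin_def[symmetric]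
    by simp
qed

end
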